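(* Let $p$ be a prime and let $a,b$ be positive integers. Let $T_a,T_b$ be the Chebyshev polynomials of the first kind of degrees $a,b$, viewed as self-maps of $\mathbb{F}_p$. A point $z\in\mathbb{F}_p$ is periodic for $T_a\circ T_b$ if and only if it is periodic for both $T_a$ and $T_b$ (not necessarily of the same period).
   Context: The $d$-th Chebyshev polynomial of the first kind $T_d\in\mathbb{Z}[z]$ is the monic degree-$d$ polynomial with $T_d(z+z^{-1})=z^d+z^{-d}$; they satisfy $T_a\circ T_b=T_b\circ T_a=T_{ab}$. A point $z$ is periodic for a map $f$ if $f^n(z)=z$ for some $n\ge1$. *)

theory Defs
  imports "HOL-Computational_Algebra.Polynomial"
begin

text \<open>Chebyshev polynomials of the first kind (normalised so that
  T_d(z + 1/z) = z^d + z^(-d)): T_0 = 2, T_1 = X, T_(n+2) = X T_(n+1) - T_n.\<close>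
fun cheb :: "nat \<Rightarrow> int poly" where
  "cheb 0 = [:2:]"
| "cheb (Suc 0) = [:0, 1:]"
| "cheb (Suc (Suc n)) = [:0, 1:] * cheb (Suc n) - cheb n"

text \<open>The induced self-map of F_p, with F_p represented by {0..p-1}.\<close>
definition cheb_map :: "int \<Rightarrow> nat \<Rightarrow> int \<Rightarrow> int" where
  "cheb_map p d z = poly (cheb d) z mod p"

definition periodic_pt :: "('a \<Rightarrow> 'a) \<Rightarrow> 'a \<Rightarrow> bool" where
  "periodic_pt f z \<longleftrightarrow> (\<exists>n\<ge>1. (f ^^ n) z = z)"

end

theory Submission
  imports Defs
begin

lemma cheb_SS: "poly (cheb (Suc (Suc n))) x = x * poly (cheb (Suc n)) x - poly (cheb n) x"
  by simp

lemma cheb_prod: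
  "n \<le> m \<Longrightarrow> poly (cheb m) x * poly (cheb n) x = poly (cheb (m+n)) x + poly (cheb (m-n)) (x::int)"
proof (induction n arbitrary: m rule: cheb.induct)
  case 1 then show ?case by simp
next
  case 2
  then obtain k where m: "m = Suc k" by (cases m) auto
  show ?case by (cases k) (simp_all add: m algebra_simps)
next
  case (3 n)
  have a: "poly (cheb m) x * poly (cheb (Suc (Suc n))) x
     = x * (poly (cheb m) x * poly (cheb (Suc n)) x) - poly (cheb m) x * poly (cheb n) x"
    by (simp add: algebra_simps)
  have b: "poly (cheb m) x * poly (cheb (Suc n)) x = poly (cheb (m + Suc n)) x + poly (cheb (m - Suc n)) x"
    using 3 by simp
  have c: "poly (cheb m) x * poly (cheb n) x = poly (cheb (m + n)) x + poly (cheb (m - n)) x"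
    using 3 by simp
  have d: "poly (cheb (m + Suc (Suc n))) x = x * poly (cheb (m + Suc n)) x - poly (cheb (m+n)) x"
    using cheb_SS[of "m+n" x] by simp
  obtain k where k: "m - n = Suc (Suc k)" using 3(3) by (intro that[of "m - n - 2"]) simp
  have e: "m - Suc n = Suc k" "m - Suc (Suc n) = k" using k by auto
  have f: "poly (cheb (m - n)) x = x * poly (cheb (m - Suc n)) x - poly (cheb (m - Suc (Suc n))) x"
    using cheb_SS[of k x] k e by simp
  show ?case using a b c d f by (simp add: algebra_simps)
qed

lemma cheb_comp: "poly (cheb k) (poly (cheb b) x) = poly (cheb (k*b)) (x::int)"
proof (induction k rule: cheb.induct)
  case 1 then show ?case by simp
next
  case 2 then show ?case by simp
next
  case (3 n)
  have "poly (cheb (Suc (Suc n))) (poly (cheb b) x)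
      = poly (cheb b) x * poly (cheb (Suc n * b)) x - poly (cheb (n*b)) x"
    using 3 by (simp add: algebra_simps)
  also have "\<dots> = poly (cheb (Suc n * b)) x * poly (cheb b) x - poly (cheb (n*b)) x"
    by (simp add: algebra_simps)
  also have "\<dots> = poly (cheb (Suc (Suc n) * b)) x"
    using cheb_prod[of b "Suc n * b" x] by (simp add: algebra_simps)
  finally show ?case .
qed

lemma poly_mod_int: "poly q (x mod p) mod p = poly q (x::int) mod p"
proof (induction q)
  case 0 then show ?case by simp
next
  case (pCons c q)
  have m: "(x mod p * poly q (x mod p)) mod p = (x * poly q x) mod p"
    by (rule mod_mult_cong) (simp_all add: pCons.IH)
  have "(c + x mod p * poly q (x mod p)) mod p = (c + x * poly q x) mod p"
    by (rule mod_add_cong) (simp_all add: m)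
  then show ?case by simp
qed


lemma cheb_map_comm: "cheb_map p a (cheb_map p b z) = cheb_map p b (cheb_map p a z)"
proof -
  have "cheb_map p a (cheb_map p b z) = poly (cheb (a*b)) z mod p"
    unfolding cheb_map_def using poly_mod_int cheb_comp by metis
  moreover have "cheb_map p b (cheb_map p a z) = poly (cheb (b*a)) z mod p"
    unfolding cheb_map_def using poly_mod_int cheb_comp by metis
  ultimately show ?thesis by (simp add: mult.commute)
qed

lemma funpow_comm: "(\<And>x. f (g x) = g (f x)) \<Longrightarrow> (f ^^ k) (g x) = g ((f ^^ k) x)"
  by (induction k) auto

lemma funpow_comp_comm:
  assumes "\<And>x. f (g x) = g (f x)"
  shows "((f \<circ> g) ^^ k) x = (f ^^ k) ((g ^^ k) x)"
proof (induction k arbitrary: x)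
  case 0 then show ?case by simp
next
  case (Suc k)
  have "((f \<circ> g) ^^ Suc k) x = f (g (((f \<circ> g) ^^ k) x))" by simp
  also have "\<dots> = f (g ((f ^^ k) ((g ^^ k) x)))" using Suc.IH[of x] by metis
  also have "\<dots> = f ((f ^^ k) (g ((g ^^ k) x)))" using funpow_comm[of f g k, OF assms] by simp
  also have "\<dots> = (f ^^ Suc k) ((g ^^ Suc k) x)"
    by (simp add: funpow_swap1)
  finally show ?case .
qed

lemma iter_fix: "(h ^^ n) z = z \<Longrightarrow> ((h ^^ n) ^^ k) z = z"
  by (induction k) auto

lemma funpow_in: "(\<And>x. x \<in> S \<Longrightarrow> g x \<in> S) \<Longrightarrow> z \<in> S \<Longrightarrow> (g ^^ k) z \<in> S"
  by (induction k) auto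

lemma per_left:
  assumes comm: "\<And>x. f (g x) = g (f x)" and fin: "finite S"
    and gS: "\<And>x. x \<in> S \<Longrightarrow> g x \<in> S" and zS: "z \<in> S"
    and per: "periodic_pt (f \<circ> g) z"
  shows "periodic_pt f z"
proof -
  obtain n where n: "n \<ge> 1" "((f \<circ> g) ^^ n) z = z" using per unfolding periodic_pt_def by blast
  have it: "(((f \<circ> g) ^^ n) ^^ k) z = z" for k
    by (rule iter_fix[OF n(2)])
  have key: "(f ^^ (k*n)) ((g ^^ (k*n)) z) = z" for k
    using it[of k] funpow_comp_comm[where f=f and g=g, OF comm, of "n*k" z]
    by (simp add: funpow_mult mult.commute)
  define h where "h k = (g ^^ (k*n)) z" for k
  have hS: "h ` {0..card S} \<subseteq> S" unfolding h_def using funpow_in[OF gS zS] by auto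
  have "\<not> inj_on h {0..card S}"
  proof
    assume "inj_on h {0..card S}"
    then have "card (h ` {0..card S}) = card {0..card S}" by (rule card_image)
    moreover have "card (h ` {0..card S}) \<le> card S" using card_mono[OF fin hS] .
    ultimately show False by simp
  qed
  then obtain i j where ij: "i \<in> {0..card S}" "j \<in> {0..card S}" "i \<noteq> j" "h i = h j"
    unfolding inj_on_def by blast
  have gen: "(f ^^ ((j-i)*n)) z = z" if "i < j" "h i = h j" for i j
  proof -
    have "(f ^^ ((j-i)*n)) z = (f ^^ ((j-i)*n)) ((f ^^ (i*n)) (h i))"
      using key[of i] h_def by simp
    also have "\<dots> = (f ^^ ((j-i)*n + i*n)) (h i)" by (simp add: funpow_add)
    also have "(j-i)*n + i*n = j*n" using that by (simp add: diff_mult_distrib)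
    also have "(f ^^ (j*n)) (h i) = z" using key[of j] h_def that by simp
    finally show ?thesis .
  qed
  show ?thesis
  proof (cases "i < j")
    case True
    then show ?thesis using gen[OF True ij(4)] n unfolding periodic_pt_def
      by (intro exI[of _ "(j-i)*n"]) simp
  next
    case False
    then have "j < i" using ij by simp
    then show ?thesis using gen[of j i] ij(4) n unfolding periodic_pt_def
      by (intro exI[of _ "(i-j)*n"]) simp
  qed
qed

lemma per_both:
  assumes comm: "\<And>x. f (g x) = g (f x)"
    and pf: "periodic_pt f z" and pg: "periodic_pt g z"
  shows "periodic_pt (f \<circ> g) z"
proof -
  obtain m where m: "m \<ge> 1" "(f ^^ m) z = z" using pf unfolding periodic_pt_def by blast
  obtain n where n: "n \<ge> 1" "(g ^^ n) z = z" using pg unfolding periodic_pt_def by blast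
  have a: "((f ^^ m) ^^ k) z = z" for k by (rule iter_fix[OF m(2)])
  have b: "((g ^^ n) ^^ k) z = z" for k by (rule iter_fix[OF n(2)])
  have "((f \<circ> g) ^^ (m*n)) z = z"
    using funpow_comp_comm[where f=f and g=g, OF comm, of "m*n" z] a[of n] b[of m]
    by (simp add: funpow_mult mult.commute)
  moreover have "m*n \<ge> 1" using m n by simp
  ultimately show ?thesis unfolding periodic_pt_def by blast
qed

theorem mainTheorem4:
  fixes p :: int and a b :: nat and z :: int
  assumes "prime p" and "a \<ge> 1" and "b \<ge> 1" and "0 \<le> z" and "z < p"
  shows "periodic_pt (cheb_map p a \<circ> cheb_map p b) z \<longleftrightarrow>
         periodic_pt (cheb_map p a) z \<and> periodic_pt (cheb_map p b) z"
proof -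
  have pp: "p > 0" using assms(1) prime_gt_0_int by blast
  let ?S = "{0..<p}"
  have fS: "\<And>x. x \<in> ?S \<Longrightarrow> cheb_map p d x \<in> ?S" for d
    unfolding cheb_map_def using pp by simp
  have zS: "z \<in> ?S" using assms by simp
  have comm: "\<And>x. cheb_map p a (cheb_map p b x) = cheb_map p b (cheb_map p a x)"
    by (rule cheb_map_comm)
  have swap: "cheb_map p b \<circ> cheb_map p a = cheb_map p a \<circ> cheb_map p b"
    using comm by (auto simp: fun_eq_iff)
  show ?thesis
  proof
    assume h: "periodic_pt (cheb_map p a \<circ> cheb_map p b) z"
    have 1: "periodic_pt (cheb_map p a) z"
      by (rule per_left[where f="cheb_map p a" and g="cheb_map p b", OF comm _ fS zS h]) simp
    have 2: "periodic_pt (cheb_map p b) z"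
      by (rule per_left[where f="cheb_map p b" and g="cheb_map p a", OF comm[symmetric] _ fS zS]) (use h swap in simp_all)
    show "periodic_pt (cheb_map p a) z \<and> periodic_pt (cheb_map p b) z" using 1 2 by simp
  next
    assume "periodic_pt (cheb_map p a) z \<and> periodic_pt (cheb_map p b) z"
    then show "periodic_pt (cheb_map p a \<circ> cheb_map p b) z"
      using per_both[where f="cheb_map p a" and g="cheb_map p b", OF comm] by blast
  qed
qed

end
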